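(* Let $d,D\ge 1$, let $\mathcal Z\subset\mathbb R^d$ be open and let $P_Z$ be a probability distribution on $\mathcal Z$. Let $K>0$ and $0<\sigma_{\min}<\sigma_{\max}$ with $\sigma_{\min}\le 1$. Let $\mathcal F$ be a class of functions ${\bf f}:\mathcal Z\to\mathbb R^D$ such that $\| |{\bf f}|_\infty\|_\infty\le K$ for every ${\bf f}\in\mathcal F$, and let $\mathcal P=\{P_{{\bf f},\sigma}:{\bf f}\in\mathcal F,\ \sigma\in[\sigma_{\min},\sigma_{\max}]\}$. Then there exist constants $c=c(D,K,\sigma_{\max})>0$, $c'=c'(D,K,\sigma_{\max})>0$ and $\delta_*=\delta_*(D)>0$ such that $$\log N_{[]}(\delta,\mathcal P,d_H)\le \log N\big(c\,\sigma_{\min}^{D+3}\delta^4,\ \mathcal F,\ \| |\cdot|_\infty\|_\infty\big)+\log\Big(\frac{c'}{\sigma_{\min}^{D+2}\delta^4}\Big)$$ for every $\delta\in(0,\delta_*]$.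
   Context: For $\sigma>0$, $\phi_\sigma=\phi_{\sigma,D}$ denotes the density of $\mathcal N({\bf 0}_D,\sigma^2\mathbb I_D)$ on $\mathbb R^D$. For ${\bf f}:\mathcal Z\to\mathbb R^D$ and $\sigma>0$, $P_{{\bf f},\sigma}$ is the distribution of ${\bf f}({\bf Z})+\boldsymbol\epsilon$ where ${\bf Z}\sim P_Z$ and $\boldsymbol\epsilon\sim\mathcal N({\bf 0}_D,\sigma^2\mathbb I_D)$ are independent; it has Lebesgue density $p_{{\bf f},\sigma}({\bf x})=\int\phi_\sigma({\bf x}-{\bf f}({\bf z}))\,dP_Z({\bf z})$. For a vector-valued function ${\bf f}$, $\| |{\bf f}|_\infty\|_\infty=\sup_{{\bf z}}\max_j|f_j({\bf z})|$, and $\| |\cdot|_\infty\|_\infty$ also denotes the induced metric $\| |{\bf f}-{\bf g}|_\infty\|_\infty$. $d_H(p,q)=\big(\int(\sqrt p-\sqrt q)^2\big)^{1/2}$ is the Hellinger distance (up to the usual normalization convention). $N(\delta,\mathcal F,d)$ is the $\delta$-covering number of $\mathcal F$ with respect to $d$, and $N_{[]}(\delta,\mathcal P,d_H)$ is the $\delta$-bracketing number of the set of densities of $\mathcal P$: the minimal number of pairs of nonnegative functions $(l,u)$ with $l\le u$ and $d_H(l,u)\le\delta$ such that every density in $\mathcal P$ lies between some $l$ and $u$. *)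

theory Defs
  imports "HOL-Probability.Probability"
begin

text \<open>Euclidean space R^d, realised inside the product space nat => real as the
  functions vanishing from index d on (so that d can be quantified inside a formula).\<close>
definition Rd :: "nat \<Rightarrow> (nat \<Rightarrow> real) set" where
  "Rd d = {z. \<forall>i\<ge>d. z i = 0}"

definition gauss_density :: "real \<Rightarrow> real ^ 'D \<Rightarrow> real" where
  "gauss_density \<sigma> x =
     (2 * pi * \<sigma>\<^sup>2) powr (- real CARD('D) / 2) * exp (- (norm x)\<^sup>2 / (2 * \<sigma>\<^sup>2))"

text \<open>Lebesgue density of P_{f,sigma}: p(x) = integral of phi_sigma(x - f z) dP_Z(z).\<close>
definition mix_density :: "'z measure \<Rightarrow> ('z \<Rightarrow> real ^ 'D) \<Rightarrow> real \<Rightarrow> real ^ 'D \<Rightarrow> real" where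
  "mix_density PZ f \<sigma> x = (\<integral>z. gauss_density \<sigma> (x - f z) \<partial>PZ)"

text \<open>Squared Hellinger distance (no 1/2 normalisation), as an extended nonnegative real.\<close>
definition hellinger_sq :: "(real ^ 'D \<Rightarrow> real) \<Rightarrow> (real ^ 'D \<Rightarrow> real) \<Rightarrow> ennreal" where
  "hellinger_sq p q = (\<integral>\<^sup>+ x. ennreal ((sqrt (p x) - sqrt (q x))\<^sup>2) \<partial>lborel)"

definition sup_dist :: "'z set \<Rightarrow> ('z \<Rightarrow> real ^ 'D) \<Rightarrow> ('z \<Rightarrow> real ^ 'D) \<Rightarrow> real" where
  "sup_dist Z f g = (SUP z\<in>Z. infnorm (f z - g z))"

text \<open>Covering number N(delta, F, d) (centres in F, closed balls); infinity if no finite cover.\<close>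
definition covering_number :: "real \<Rightarrow> 'a set \<Rightarrow> ('a \<Rightarrow> 'a \<Rightarrow> real) \<Rightarrow> enat" where
  "covering_number \<delta> F dst =
     Inf {enat (card C) | C. finite C \<and> C \<subseteq> F \<and> (\<forall>f\<in>F. \<exists>g\<in>C. dst f g \<le> \<delta>)}"

definition bracketing_number :: "real \<Rightarrow> (real ^ 'D \<Rightarrow> real) set \<Rightarrow> enat" where
  "bracketing_number \<delta> Ps =
     Inf {enat (card B) | B. finite B \<and>
        (\<forall>(l, u)\<in>B. l \<in> borel_measurable lborel \<and> u \<in> borel_measurable lborel \<and>
            (\<forall>x. 0 \<le> l x \<and> l x \<le> u x) \<and> hellinger_sq l u \<le> ennreal (\<delta>\<^sup>2)) \<and>
        (\<forall>p\<in>Ps. \<exists>(l, u)\<in>B. \<forall>x. l x \<le> p x \<and> p x \<le> u x)}"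

end

theory Submission imports Defs begin

lemma gauss_alt:
  fixes x :: "real ^ 'D"
  assumes "\<sigma> > 0"
  shows "gauss_density \<sigma> x = (1 / (sqrt (2*pi) * \<sigma>)) ^ CARD('D) * exp (- (norm x)\<^sup>2 / (2 * \<sigma>\<^sup>2))"
proof -
  have pos: "2*pi*\<sigma>\<^sup>2 > 0" using assms by simp
  have "(2*pi*\<sigma>\<^sup>2) powr (- real CARD('D) / 2) = inverse (((2*pi*\<sigma>\<^sup>2) powr (1/2)) powr real CARD('D))"
    using pos by (simp add: powr_powr powr_minus[symmetric])
  also have "\<dots> = inverse (sqrt (2*pi*\<sigma>\<^sup>2) ^ CARD('D))"
    using pos by (simp add: powr_half_sqrt powr_realpow)
  also have "sqrt (2*pi*\<sigma>\<^sup>2) = sqrt (2*pi) * \<sigma>"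
    using assms by (simp add: real_sqrt_mult)
  finally have e: "(2*pi*\<sigma>\<^sup>2) powr (- real CARD('D) / 2) = inverse ((sqrt (2*pi) * \<sigma>) ^ CARD('D))" .
  have "(1 / (sqrt (2*pi) * \<sigma>)) ^ CARD('D) = inverse ((sqrt (2*pi) * \<sigma>) ^ CARD('D))"
    by (simp add: power_one_over inverse_eq_divide)
  then show ?thesis unfolding gauss_density_def e by simp
qed

lemma gauss_prod:
  fixes x :: "real ^ 'D"
  assumes "\<sigma> > 0"
  shows "gauss_density \<sigma> x = (\<Prod>b\<in>Basis. normal_density 0 \<sigma> (x \<bullet> b))"
proof -
  have n: "(norm x)\<^sup>2 = (\<Sum>b\<in>Basis. (x \<bullet> b)\<^sup>2)"
    unfolding power2_norm_eq_inner by (subst euclidean_inner) (simp add: power2_eq_square)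
  have c: "card (Basis :: (real^'D) set) = CARD('D)" using DIM_cart[where 'a=real and 'b='D] by simp
  have "(\<Prod>b\<in>Basis. normal_density 0 \<sigma> (x \<bullet> b)) =
     (\<Prod>b\<in>(Basis::(real^'D) set). 1 / (sqrt (2*pi) * \<sigma>) * exp (- (x \<bullet> b)\<^sup>2 / (2 * \<sigma>\<^sup>2)))"
    using assms by (intro prod.cong) (auto simp: normal_density_def real_sqrt_mult)
  also have "\<dots> = (1 / (sqrt (2*pi) * \<sigma>)) ^ CARD('D) * exp (\<Sum>b\<in>(Basis::(real^'D) set). - (x \<bullet> b)\<^sup>2 / (2 * \<sigma>\<^sup>2))"
    by (simp only: prod.distrib prod_constant c exp_sum[OF finite_Basis])
  also have "(\<Sum>b\<in>(Basis::(real^'D) set). - (x \<bullet> b)\<^sup>2 / (2 * \<sigma>\<^sup>2)) = - (norm x)\<^sup>2 / (2 * \<sigma>\<^sup>2)"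
    unfolding n by (simp add: sum_divide_distrib sum_negf)
  finally show ?thesis using gauss_alt[OF assms] by simp
qed

lemma gauss_nonneg: "\<sigma> > 0 \<Longrightarrow> 0 \<le> gauss_density \<sigma> x"
  unfolding gauss_density_def by simp

lemma gauss_measurable[measurable]: "gauss_density \<sigma> \<in> borel_measurable borel"
  unfolding gauss_density_def[abs_def] by measurable

lemma gauss_bound: "\<sigma> > 0 \<Longrightarrow> gauss_density \<sigma> (x::real^'D) \<le> (1 / (sqrt (2*pi) * \<sigma>)) ^ CARD('D)"
  by (subst gauss_alt) (auto intro!: mult_left_le)

lemma gauss_nn_integral:
  assumes "\<sigma> > 0"
  shows "(\<integral>\<^sup>+x. ennreal (gauss_density \<sigma> (x :: real ^ 'D)) \<partial>lborel) = 1"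
proof -
  have 1: "(\<integral>\<^sup>+t. ennreal (normal_density 0 \<sigma> t) \<partial>lborel) = 1"
    using assms by (subst nn_integral_eq_integral) (auto simp: integrable_normal_density integral_normal_density)
  have "(\<integral>\<^sup>+x. ennreal (gauss_density \<sigma> (x :: real ^ 'D)) \<partial>lborel) =
        (\<integral>\<^sup>+x. (\<Prod>b\<in>Basis. ennreal (normal_density 0 \<sigma> ((x :: real ^ 'D) \<bullet> b))) \<partial>lborel)"
    using assms by (simp add: gauss_prod prod_ennreal)
  also have "\<dots> = (\<Prod>b\<in>(Basis :: (real^'D) set). (\<integral>\<^sup>+t. ennreal (normal_density 0 \<sigma> t) \<partial>lborel))"
    by (rule nn_integral_lborel_prod) auto
  finally show ?thesis using 1 by simp
qed

lemma gauss_has_integral: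
  assumes "\<sigma> > 0"
  shows "has_bochner_integral lborel (gauss_density \<sigma> :: real ^ 'D \<Rightarrow> real) 1"
  by (rule has_bochner_integral_nn_integral) (use assms gauss_nn_integral[OF assms] gauss_nonneg in auto)
lemma sq_lower:
  fixes a b \<epsilon> :: real
  assumes "0 < \<epsilon>"
  shows "(1 - \<epsilon>) * a\<^sup>2 - b\<^sup>2 / \<epsilon> \<le> (a - b)\<^sup>2"
proof -
  have "0 \<le> (\<epsilon> * a - b)\<^sup>2 / \<epsilon>" using assms by simp
  also have "(\<epsilon> * a - b)\<^sup>2 / \<epsilon> = \<epsilon> * a\<^sup>2 - 2*a*b + b\<^sup>2/\<epsilon>"
    using assms by (simp add: power2_eq_square field_simps)
  finally have "0 \<le> \<epsilon> * a\<^sup>2 - 2*a*b + b\<^sup>2/\<epsilon>" .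
  moreover have "(a-b)\<^sup>2 - ((1 - \<epsilon>) * a\<^sup>2 - b\<^sup>2 / \<epsilon>) = (\<epsilon> * a\<^sup>2 - 2*a*b + b\<^sup>2/\<epsilon>) + b\<^sup>2"
    by (simp add: power2_eq_square algebra_simps)
  moreover have "0 \<le> b\<^sup>2" by simp
  ultimately show ?thesis by linarith
qed

lemma sq_upper:
  fixes a b \<epsilon> :: real
  assumes "0 < \<epsilon>"
  shows "(a + b)\<^sup>2 \<le> (1 + \<epsilon>) * a\<^sup>2 + (1 + 1/\<epsilon>) * b\<^sup>2"
proof -
  have "0 \<le> (\<epsilon> * a - b)\<^sup>2 / \<epsilon>" using assms by simp
  also have "(\<epsilon> * a - b)\<^sup>2 / \<epsilon> = \<epsilon> * a\<^sup>2 - 2*a*b + b\<^sup>2/\<epsilon>"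
    using assms by (simp add: power2_eq_square field_simps)
  finally have "0 \<le> \<epsilon> * a\<^sup>2 - 2*a*b + b\<^sup>2/\<epsilon>" .
  then show ?thesis by (simp add: power2_eq_square algebra_simps)
qed

lemma norm_diff_sq_lower:
  fixes w v :: "'a::real_normed_vector"
  assumes "0 < \<epsilon>" "norm v \<le> \<rho>"
  shows "(1 - \<epsilon>) * (norm w)\<^sup>2 - \<rho>\<^sup>2 / \<epsilon> \<le> (norm (w - v))\<^sup>2"
proof -
  have "\<bar>norm w - norm v\<bar> \<le> norm (w - v)" by (rule norm_triangle_ineq3)
  then have "(norm w - norm v)\<^sup>2 \<le> (norm (w - v))\<^sup>2"
    by (metis abs_le_square_iff abs_norm_cancel)
  moreover have "(norm v)\<^sup>2 \<le> \<rho>\<^sup>2" using assms(2) by (simp add: power_mono)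
  then have "\<rho>\<^sup>2 / \<epsilon> \<ge> (norm v)\<^sup>2 / \<epsilon>" using assms(1) by (simp add: divide_right_mono)
  ultimately show ?thesis using sq_lower[OF assms(1), of "norm w" "norm v"] by linarith
qed

lemma norm_diff_sq_upper:
  fixes w v :: "'a::real_normed_vector"
  assumes "0 < \<epsilon>" "norm v \<le> \<rho>"
  shows "(norm (w - v))\<^sup>2 \<le> (1 + \<epsilon>) * (norm w)\<^sup>2 + (1 + 1/\<epsilon>) * \<rho>\<^sup>2"
proof -
  have "norm (w - v) \<le> norm w + norm v" by (rule norm_triangle_ineq4)
  then have "(norm (w - v))\<^sup>2 \<le> (norm w + norm v)\<^sup>2" by (simp add: power_mono)
  moreover have "(norm v)\<^sup>2 \<le> \<rho>\<^sup>2" using assms(2) by (simp add: power_mono)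
  then have "(1 + 1/\<epsilon>) * (norm v)\<^sup>2 \<le> (1 + 1/\<epsilon>) * \<rho>\<^sup>2" using assms(1) by (simp add: mult_left_mono)
  ultimately show ?thesis using sq_upper[OF assms(1), of "norm w" "norm v"] by linarith
qed
lemma gauss_upper:
  fixes w v :: "real ^ 'D"
  assumes s: "0 < s" "s \<le> \<sigma>" "\<sigma> \<le> s'" and e: "0 < \<epsilon>" "\<epsilon> < 1" and v: "norm v \<le> \<rho>"
  shows "gauss_density \<sigma> (w - v) \<le>
     (s' / (sqrt (1 - \<epsilon>) * s)) ^ CARD('D) * exp (\<rho>\<^sup>2 / (2 * \<epsilon> * s\<^sup>2)) * gauss_density (s' / sqrt (1 - \<epsilon>)) w"
proof -
  define t where "t = s' / sqrt (1 - \<epsilon>)"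
  have sq: "sqrt (1 - \<epsilon>) > 0" using e by simp
  have t: "t > 0" using s sq by (simp add: t_def)
  have t2: "t\<^sup>2 = s'\<^sup>2 / (1 - \<epsilon>)" using e by (simp add: t_def power_divide)
  define A where "A = (norm w)\<^sup>2"
  define B where "B = (norm (w - v))\<^sup>2"
  have AB: "(1 - \<epsilon>) * A - \<rho>\<^sup>2 / \<epsilon> \<le> B" unfolding A_def B_def by (rule norm_diff_sq_lower[OF e(1) v])
  have A0: "0 \<le> A" unfolding A_def by simp
  have "- B / (2 * \<sigma>\<^sup>2) \<le> - ((1 - \<epsilon>) * A - \<rho>\<^sup>2 / \<epsilon>) / (2 * \<sigma>\<^sup>2)"
    using AB s by (intro divide_right_mono) auto
  also have "\<dots> = - ((1 - \<epsilon>) * A) / (2 * \<sigma>\<^sup>2) + \<rho>\<^sup>2 / (2 * \<epsilon> * \<sigma>\<^sup>2)"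
    using e s by (simp add: field_simps)
  also have "\<dots> \<le> - ((1 - \<epsilon>) * A) / (2 * s'\<^sup>2) + \<rho>\<^sup>2 / (2 * \<epsilon> * s\<^sup>2)"
  proof (rule add_mono)
    have "(1 - \<epsilon>) * A / (2 * s'\<^sup>2) \<le> (1 - \<epsilon>) * A / (2 * \<sigma>\<^sup>2)"
      using s e A0 by (intro divide_left_mono mult_left_mono power_mono) auto
    then show "- ((1 - \<epsilon>) * A) / (2 * \<sigma>\<^sup>2) \<le> - ((1 - \<epsilon>) * A) / (2 * s'\<^sup>2)" by simp
    show "\<rho>\<^sup>2 / (2 * \<epsilon> * \<sigma>\<^sup>2) \<le> \<rho>\<^sup>2 / (2 * \<epsilon> * s\<^sup>2)"
      using s e by (intro divide_left_mono mult_left_mono power_mono) auto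
  qed
  also have "- ((1 - \<epsilon>) * A) / (2 * s'\<^sup>2) = - A / (2 * t\<^sup>2)"
    using e s by (simp add: t2 field_simps)
  finally have ex: "exp (- B / (2 * \<sigma>\<^sup>2)) \<le> exp (\<rho>\<^sup>2 / (2 * \<epsilon> * s\<^sup>2)) * exp (- A / (2 * t\<^sup>2))"
    by (simp add: mult_exp_exp add.commute)
  have k: "(1 / (sqrt (2*pi) * \<sigma>)) ^ CARD('D) \<le> (1 / (sqrt (2*pi) * s)) ^ CARD('D)"
    using s by (intro power_mono divide_left_mono mult_left_mono) auto
  have kt: "(t / s) * (1 / (sqrt (2*pi) * t)) = 1 / (sqrt (2*pi) * s)"
    using t s by (simp add: field_simps)
  have "gauss_density \<sigma> (w - v) = (1 / (sqrt (2*pi) * \<sigma>)) ^ CARD('D) * exp (- B / (2 * \<sigma>\<^sup>2))"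
    using s by (simp add: gauss_alt B_def)
  also have "\<dots> \<le> (1 / (sqrt (2*pi) * s)) ^ CARD('D) * (exp (\<rho>\<^sup>2 / (2 * \<epsilon> * s\<^sup>2)) * exp (- A / (2 * t\<^sup>2)))"
    using k ex s by (intro mult_mono) auto
  also have "(1 / (sqrt (2*pi) * s)) ^ CARD('D) = (t / s) ^ CARD('D) * (1 / (sqrt (2*pi) * t)) ^ CARD('D)"
    by (simp only: power_mult_distrib[symmetric] kt)
  also have "(t / s) ^ CARD('D) * (1 / (sqrt (2*pi) * t)) ^ CARD('D) * (exp (\<rho>\<^sup>2 / (2 * \<epsilon> * s\<^sup>2)) * exp (- A / (2 * t\<^sup>2)))
     = (t / s) ^ CARD('D) * exp (\<rho>\<^sup>2 / (2 * \<epsilon> * s\<^sup>2)) * gauss_density t w"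
    using t by (simp add: gauss_alt A_def)
  finally show ?thesis by (simp add: t_def)
qed

lemma gauss_lower:
  fixes w v :: "real ^ 'D"
  assumes s: "0 < s" "s \<le> \<sigma>" "\<sigma> \<le> s'" and e: "0 < \<epsilon>" and v: "norm v \<le> \<rho>"
  shows "(s / (sqrt (1 + \<epsilon>) * s')) ^ CARD('D) * exp (- ((1 + 1/\<epsilon>) * \<rho>\<^sup>2 / (2 * s\<^sup>2))) * gauss_density (s / sqrt (1 + \<epsilon>)) w
     \<le> gauss_density \<sigma> (w - v)"
proof -
  define t where "t = s / sqrt (1 + \<epsilon>)"
  have sq: "sqrt (1 + \<epsilon>) > 0" using e by simp
  have t: "t > 0" using s sq by (simp add: t_def)
  have t2: "t\<^sup>2 = s\<^sup>2 / (1 + \<epsilon>)" using e by (simp add: t_def power_divide)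
  define A where "A = (norm w)\<^sup>2"
  define B where "B = (norm (w - v))\<^sup>2"
  have AB: "B \<le> (1 + \<epsilon>) * A + (1 + 1/\<epsilon>) * \<rho>\<^sup>2" unfolding A_def B_def by (rule norm_diff_sq_upper[OF e(1) v])
  have B0: "0 \<le> B" unfolding B_def by simp
  have "- A / (2 * t\<^sup>2) - (1 + 1/\<epsilon>) * \<rho>\<^sup>2 / (2 * s\<^sup>2) = - ((1 + \<epsilon>) * A + (1 + 1/\<epsilon>) * \<rho>\<^sup>2) / (2 * s\<^sup>2)"
    using e s by (simp add: t2 field_simps)
  also have "\<dots> \<le> - B / (2 * s\<^sup>2)"
    using AB s by (intro divide_right_mono) auto
  also have "\<dots> \<le> - B / (2 * \<sigma>\<^sup>2)"
  proof -
    have "B / (2 * \<sigma>\<^sup>2) \<le> B / (2 * s\<^sup>2)"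
      using s B0 by (intro divide_left_mono mult_left_mono power_mono) auto
    then show ?thesis by simp
  qed
  finally have ex: "exp (- ((1 + 1/\<epsilon>) * \<rho>\<^sup>2 / (2 * s\<^sup>2))) * exp (- A / (2 * t\<^sup>2)) \<le> exp (- B / (2 * \<sigma>\<^sup>2))"
    by (simp add: mult_exp_exp add.commute)
  have k: "(1 / (sqrt (2*pi) * s')) ^ CARD('D) \<le> (1 / (sqrt (2*pi) * \<sigma>)) ^ CARD('D)"
    using s by (intro power_mono divide_left_mono mult_left_mono) auto
  have kt: "(t / s') * (1 / (sqrt (2*pi) * t)) = 1 / (sqrt (2*pi) * s')"
    using t s by (simp add: field_simps)
  have "(t / s') ^ CARD('D) * exp (- ((1 + 1/\<epsilon>) * \<rho>\<^sup>2 / (2 * s\<^sup>2))) * gauss_density t w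
     = (t / s') ^ CARD('D) * (1 / (sqrt (2*pi) * t)) ^ CARD('D) * (exp (- ((1 + 1/\<epsilon>) * \<rho>\<^sup>2 / (2 * s\<^sup>2))) * exp (- A / (2 * t\<^sup>2)))"
    using t by (simp add: gauss_alt A_def)
  also have "(t / s') ^ CARD('D) * (1 / (sqrt (2*pi) * t)) ^ CARD('D) = (1 / (sqrt (2*pi) * s')) ^ CARD('D)"
    by (simp only: power_mult_distrib[symmetric] kt)
  also have "(1 / (sqrt (2*pi) * s')) ^ CARD('D) * (exp (- ((1 + 1/\<epsilon>) * \<rho>\<^sup>2 / (2 * s\<^sup>2))) * exp (- A / (2 * t\<^sup>2)))
     \<le> (1 / (sqrt (2*pi) * \<sigma>)) ^ CARD('D) * exp (- B / (2 * \<sigma>\<^sup>2))"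
    using k ex s by (intro mult_mono) auto
  also have "\<dots> = gauss_density \<sigma> (w - v)"
    using s by (simp add: gauss_alt B_def)
  finally show ?thesis by (simp add: t_def)
qed
lemma base_upper:
  fixes s s' \<epsilon> :: real
  assumes "0 < s" "s' \<le> (1 + \<epsilon>) * s" "0 < \<epsilon>" "\<epsilon> \<le> 1/2" "0 < s'"
  shows "s' / (sqrt (1 - \<epsilon>) * s) \<le> exp (3 * \<epsilon>)"
proof -
  have q: "0 < sqrt (1 - \<epsilon>)" using assms by simp
  have sq: "1 - \<epsilon> \<le> sqrt (1 - \<epsilon>)"
    using assms by (intro real_le_rsqrt) (auto simp: power2_eq_square intro!: mult_le_one)
  have "s' / (sqrt (1 - \<epsilon>) * s) \<le> (1 + \<epsilon>) * s / ((1 - \<epsilon>) * s)"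
    using assms q sq by (intro frac_le mult_pos_pos mult_right_mono) auto
  also have "\<dots> = (1 + \<epsilon>) * (1 / (1 - \<epsilon>))" using assms by simp
  also have "\<dots> \<le> exp \<epsilon> * exp (2 * \<epsilon>)"
  proof (rule mult_mono)
    show "1 + \<epsilon> \<le> exp \<epsilon>" by (rule exp_ge_add_one_self)
    have p: "0 \<le> \<epsilon> * (1 - 2 * \<epsilon>)" using assms by simp
    have "(1 + 2 * \<epsilon>) * (1 - \<epsilon>) = 1 + \<epsilon> * (1 - 2 * \<epsilon>)" by (simp add: algebra_simps)
    then have "1 \<le> (1 + 2 * \<epsilon>) * (1 - \<epsilon>)" using p by simp
    then have "1 / (1 - \<epsilon>) \<le> 1 + 2 * \<epsilon>"
      using assms by (simp add: divide_le_eq)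
    also have "\<dots> \<le> exp (2 * \<epsilon>)" by (rule exp_ge_add_one_self)
    finally show "1 / (1 - \<epsilon>) \<le> exp (2 * \<epsilon>)" .
  qed (use assms in auto)
  also have "\<dots> = exp (3 * \<epsilon>)" by (subst mult_exp_exp) simp
  finally show ?thesis .
qed

lemma base_lower:
  fixes s s' \<epsilon> :: real
  assumes "0 < s" "s' \<le> (1 + \<epsilon>) * s" "0 < \<epsilon>" "0 < s'"
  shows "exp (- (2 * \<epsilon>)) \<le> s / (sqrt (1 + \<epsilon>) * s')"
proof -
  have sq: "sqrt (1 + \<epsilon>) \<le> 1 + \<epsilon>"
  proof -
    have "sqrt (1 + \<epsilon>) \<le> sqrt ((1 + \<epsilon>)\<^sup>2)"
      using assms by (intro real_sqrt_le_mono) (auto simp: power2_eq_square)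
    then show ?thesis using assms by simp
  qed
  have e1: "exp (- \<epsilon>) \<le> 1 / (1 + \<epsilon>)"
    using exp_ge_add_one_self[of \<epsilon>] assms by (simp add: exp_minus field_simps)
  have "exp (- (2 * \<epsilon>)) = exp (- \<epsilon>) * exp (- \<epsilon>)" by (subst mult_exp_exp) simp
  also have "\<dots> \<le> (1 / (1 + \<epsilon>)) * (1 / (1 + \<epsilon>))" using e1 assms by (intro mult_mono) auto
  also have "\<dots> = s / ((1 + \<epsilon>) * ((1 + \<epsilon>) * s))" using assms by simp
  also have "\<dots> \<le> s / (sqrt (1 + \<epsilon>) * s')"
    using assms sq by (intro divide_left_mono mult_mono mult_pos_pos) auto
  finally show ?thesis .
qed

lemma const_diff:
  fixes s s' \<epsilon> \<rho> :: real and n :: nat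
  assumes "0 < s" "s \<le> s'" "s' \<le> (1 + \<epsilon>) * s" "0 < \<epsilon>" "0 \<le> \<rho>" "\<rho> \<le> \<epsilon> * s"
    and "n \<ge> 1" "4 * n * \<epsilon> \<le> 1/2"
  shows "(s' / (sqrt (1 - \<epsilon>) * s)) ^ n * exp (\<rho>\<^sup>2 / (2 * \<epsilon> * s\<^sup>2))
       - (s / (sqrt (1 + \<epsilon>) * s')) ^ n * exp (- ((1 + 1/\<epsilon>) * \<rho>\<^sup>2 / (2 * s\<^sup>2))) \<le> 12 * n * \<epsilon>"
proof -
  have "1 * \<epsilon> \<le> real n * \<epsilon>" using assms by (intro mult_right_mono) auto
  then have e2: "\<epsilon> \<le> 1/2" using assms by linarith
  have s': "0 < s'" using assms by simp
  have r2: "\<rho>\<^sup>2 \<le> (\<epsilon> * s)\<^sup>2" using assms by (intro power_mono) auto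
  have E1: "\<rho>\<^sup>2 / (2 * \<epsilon> * s\<^sup>2) \<le> \<epsilon>"
  proof -
    have "\<rho>\<^sup>2 / (2 * \<epsilon> * s\<^sup>2) \<le> (\<epsilon> * s)\<^sup>2 / (2 * \<epsilon> * s\<^sup>2)"
      using r2 assms by (intro divide_right_mono) auto
    also have "\<dots> = \<epsilon> / 2" using assms by (simp add: power2_eq_square field_simps)
    finally show ?thesis using assms by simp
  qed
  have E2: "- \<epsilon> \<le> - ((1 + 1/\<epsilon>) * \<rho>\<^sup>2 / (2 * s\<^sup>2))"
  proof -
    have "(1 + 1/\<epsilon>) * \<rho>\<^sup>2 / (2 * s\<^sup>2) \<le> (1 + 1/\<epsilon>) * (\<epsilon> * s)\<^sup>2 / (2 * s\<^sup>2)"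
      using r2 assms by (intro divide_right_mono mult_left_mono) auto
    also have "\<dots> = (\<epsilon> * \<epsilon> + \<epsilon>) / 2" using assms by (simp add: power2_eq_square field_simps)
    also have "\<dots> \<le> \<epsilon>"
    proof -
      have "\<epsilon> * \<epsilon> \<le> \<epsilon> * 1" using assms e2 by (intro mult_left_mono) auto
      then show ?thesis by simp
    qed
    finally show ?thesis by simp
  qed
  have up: "(s' / (sqrt (1 - \<epsilon>) * s)) ^ n * exp (\<rho>\<^sup>2 / (2 * \<epsilon> * s\<^sup>2)) \<le> exp (4 * n * \<epsilon>)"
  proof -
    have "(s' / (sqrt (1 - \<epsilon>) * s)) ^ n * exp (\<rho>\<^sup>2 / (2 * \<epsilon> * s\<^sup>2)) \<le> exp (3 * \<epsilon>) ^ n * exp (n * \<epsilon>)"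
    proof (rule mult_mono)
      show "(s' / (sqrt (1 - \<epsilon>) * s)) ^ n \<le> exp (3 * \<epsilon>) ^ n"
        using assms e2 s' by (intro power_mono base_upper) auto
      have "\<epsilon> \<le> n * \<epsilon>" using assms by simp
      then show "exp (\<rho>\<^sup>2 / (2 * \<epsilon> * s\<^sup>2)) \<le> exp (n * \<epsilon>)" using E1 by simp
    qed auto
    also have "\<dots> = exp (4 * n * \<epsilon>)"
      by (simp add: exp_of_nat_mult[symmetric] mult_exp_exp algebra_simps)
    finally show ?thesis .
  qed
  have lo: "exp (- (4 * n * \<epsilon>)) \<le> (s / (sqrt (1 + \<epsilon>) * s')) ^ n * exp (- ((1 + 1/\<epsilon>) * \<rho>\<^sup>2 / (2 * s\<^sup>2)))"
  proof -
    have "exp (- (4 * n * \<epsilon>)) \<le> exp (- (2 * \<epsilon>)) ^ n * exp (- (n * \<epsilon>))"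
      using assms by (simp add: exp_of_nat_mult[symmetric] mult_exp_exp algebra_simps)
    also have "\<dots> \<le> (s / (sqrt (1 + \<epsilon>) * s')) ^ n * exp (- ((1 + 1/\<epsilon>) * \<rho>\<^sup>2 / (2 * s\<^sup>2)))"
    proof (rule mult_mono)
      show "exp (- (2 * \<epsilon>)) ^ n \<le> (s / (sqrt (1 + \<epsilon>) * s')) ^ n"
        using assms s' by (intro power_mono base_lower) auto
      have "\<epsilon> \<le> n * \<epsilon>" using assms by simp
      then show "exp (- (n * \<epsilon>)) \<le> exp (- ((1 + 1/\<epsilon>) * \<rho>\<^sup>2 / (2 * s\<^sup>2)))" using E2 by simp
    qed (use assms s' in auto)
    finally show ?thesis .
  qed
  define y where "y = 4 * n * \<epsilon>"
  have y: "0 \<le> y" "y \<le> 1/2" using assms by (auto simp: y_def)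
  have "exp y \<le> 1 + 2 * y" using y by (intro real_exp_bound_lemma) auto
  moreover have "1 - y \<le> exp (- y)" using exp_ge_add_one_self[of "-y"] by simp
  ultimately have "exp y - exp (- y) \<le> 3 * y" by simp
  then show ?thesis using up lo unfolding y_def by simp
qed
lemma gauss_comp_integrable:
  fixes g :: "'z \<Rightarrow> real ^ 'D"
  assumes "prob_space PZ" "g \<in> borel_measurable PZ" "t > 0"
  shows "integrable PZ (\<lambda>z. a * gauss_density t (x - g z))"
proof -
  interpret prob_space PZ by fact
  show ?thesis
  proof (rule integrable_const_bound[where B="\<bar>a\<bar> * (1 / (sqrt (2*pi) * t)) ^ CARD('D)"])
    show "AE z in PZ. norm (a * gauss_density t (x - g z)) \<le> \<bar>a\<bar> * (1 / (sqrt (2*pi) * t)) ^ CARD('D)"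
    proof (rule AE_I2)
      fix z
      have "gauss_density t (x - g z) \<le> (1 / (sqrt (2*pi) * t)) ^ CARD('D)"
        by (rule gauss_bound[OF assms(3)])
      moreover have "0 \<le> gauss_density t (x - g z)" by (rule gauss_nonneg[OF assms(3)])
      ultimately show "norm (a * gauss_density t (x - g z)) \<le> \<bar>a\<bar> * (1 / (sqrt (2*pi) * t)) ^ CARD('D)"
        by (auto simp: abs_mult intro!: mult_left_mono)
    qed
    show "(\<lambda>z. a * gauss_density t (x - g z)) \<in> borel_measurable PZ"
      using assms(2) by measurable
  qed
qed
lemma translate_nn:
  fixes h :: "real ^ 'D \<Rightarrow> ennreal"
  assumes [measurable]: "h \<in> borel_measurable borel"
  shows "(\<integral>\<^sup>+x. h (x - c) \<partial>lborel) = (\<integral>\<^sup>+x. h x \<partial>lborel)"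
proof -
  have "(\<integral>\<^sup>+x. h (x - c) \<partial>lborel) = (\<integral>\<^sup>+x. h (x - c) \<partial>(distr lborel borel ((+) c)))"
    by (simp add: lborel_distr_plus)
  also have "\<dots> = (\<integral>\<^sup>+x. h (c + x - c) \<partial>lborel)"
    by (subst nn_integral_distr) auto
  finally show ?thesis by simp
qed

lemma bracket_generic:
  fixes g :: "'z \<Rightarrow> real ^ ('D::finite)"
  assumes P: "prob_space PZ" and g[measurable]: "g \<in> borel_measurable PZ"
    and t: "tU > 0" "tL > 0" and aL: "aL \<ge> 0"
    and pw: "\<And>w::real ^ 'D. aL * gauss_density tL w \<le> aU * gauss_density tU w"
  defines "u \<equiv> \<lambda>x. \<integral>z. aU * gauss_density tU (x - g z) \<partial>PZ"
    and "l \<equiv> \<lambda>x. \<integral>z. aL * gauss_density tL (x - g z) \<partial>PZ"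
  shows "u \<in> borel_measurable lborel" "l \<in> borel_measurable lborel"
    "\<forall>x. 0 \<le> l x \<and> l x \<le> u x"
    "hellinger_sq l u \<le> ennreal (aU - aL)"
proof -
  interpret prob_space PZ by fact
  have sf: "sigma_finite_measure PZ" by unfold_locales
  have intU: "\<And>x. integrable PZ (\<lambda>z. aU * gauss_density tU (x - g z))"
    by (rule gauss_comp_integrable[OF P g t(1)])
  have intL: "\<And>x. integrable PZ (\<lambda>z. aL * gauss_density tL (x - g z))"
    by (rule gauss_comp_integrable[OF P g t(2)])
  show "u \<in> borel_measurable lborel" unfolding u_def
    by (rule sigma_finite_measure.borel_measurable_lebesgue_integral[OF sf]) measurable
  show "l \<in> borel_measurable lborel" unfolding l_def
    by (rule sigma_finite_measure.borel_measurable_lebesgue_integral[OF sf]) measurable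
  have l0: "0 \<le> l x" for x unfolding l_def
    using aL t by (intro integral_nonneg_AE) (auto intro!: mult_nonneg_nonneg gauss_nonneg)
  have lu: "l x \<le> u x" for x unfolding l_def u_def
    by (rule integral_mono[OF intL intU]) (rule pw)
  show "\<forall>x. 0 \<le> l x \<and> l x \<le> u x" using l0 lu by auto
  define W where "W = (\<lambda>w::real ^ 'D. aU * gauss_density tU w - aL * gauss_density tL w)"
  have W0: "0 \<le> W w" for w using pw[of w] by (simp add: W_def)
  have Wm[measurable]: "W \<in> borel_measurable borel" unfolding W_def by measurable
  have diff: "u x - l x = (\<integral>z. W (x - g z) \<partial>PZ)" for x
    unfolding u_def l_def W_def by (rule Bochner_Integration.integral_diff[symmetric, OF intU intL])
  have G1: "integrable lborel (gauss_density tU :: real ^ 'D \<Rightarrow> real)" "integral\<^sup>L lborel (gauss_density tU :: real ^ 'D \<Rightarrow> real) = 1"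
    using has_bochner_integral_iff[THEN iffD1, OF gauss_has_integral[OF t(1)]] by auto
  have G2: "integrable lborel (gauss_density tL :: real ^ 'D \<Rightarrow> real)" "integral\<^sup>L lborel (gauss_density tL :: real ^ 'D \<Rightarrow> real) = 1"
    using has_bochner_integral_iff[THEN iffD1, OF gauss_has_integral[OF t(2)]] by auto
  have Wint: "integrable lborel W" unfolding W_def using G1 G2 by auto
  have Wval: "(\<integral>w. W w \<partial>lborel) = aU - aL" unfolding W_def
    using G1 G2 by (simp add: Bochner_Integration.integral_diff)
  have Wnn: "(\<integral>\<^sup>+w. ennreal (W w) \<partial>(lborel :: (real ^ 'D) measure)) = ennreal (aU - aL)"
    using Wint W0 Wval by (subst nn_integral_eq_integral) auto
  have "hellinger_sq l u = (\<integral>\<^sup>+x. ennreal ((sqrt (l x) - sqrt (u x))\<^sup>2) \<partial>lborel)"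
    unfolding hellinger_sq_def ..
  also have "\<dots> \<le> (\<integral>\<^sup>+x. ennreal (u x - l x) \<partial>lborel)"
  proof (rule nn_integral_mono, rule ennreal_leI)
    fix x
    have a: "0 \<le> l x" "l x \<le> u x" using l0 lu by auto
    have "sqrt (l x) * sqrt (l x) \<le> sqrt (l x) * sqrt (u x)"
      using a by (intro mult_left_mono) auto
    then have "sqrt (l x) * sqrt (l x) \<le> sqrt (l x * u x)" by (simp add: real_sqrt_mult)
    moreover have "(sqrt (l x) - sqrt (u x))\<^sup>2 = l x + u x - 2 * (sqrt (l x) * sqrt (u x))"
      using a by (simp add: power2_eq_square algebra_simps)
    moreover have "sqrt (l x) * sqrt (l x) = l x" using a by simp
    ultimately show "(sqrt (l x) - sqrt (u x))\<^sup>2 \<le> u x - l x" by (simp add: real_sqrt_mult)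
  qed
  also have "\<dots> = (\<integral>\<^sup>+x. (\<integral>\<^sup>+z. ennreal (W (x - g z)) \<partial>PZ) \<partial>lborel)"
  proof (rule nn_integral_cong)
    fix x
    have "integrable PZ (\<lambda>z. W (x - g z))" unfolding W_def using intU intL by auto
    then show "ennreal (u x - l x) = (\<integral>\<^sup>+z. ennreal (W (x - g z)) \<partial>PZ)"
      unfolding diff using W0 by (subst nn_integral_eq_integral) auto
  qed
  also have "\<dots> = (\<integral>\<^sup>+z. (\<integral>\<^sup>+x. ennreal (W (x - g z)) \<partial>lborel) \<partial>PZ)"
  proof (rule pair_sigma_finite.Fubini')
    show "pair_sigma_finite PZ lborel" by (intro pair_sigma_finite.intro sf lborel.sigma_finite_measure_axioms)
    show "(\<lambda>(z, x). ennreal (W (x - g z))) \<in> borel_measurable (PZ \<Otimes>\<^sub>M lborel)" by measurable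
  qed
  also have "\<dots> = (\<integral>\<^sup>+z. ennreal (aU - aL) \<partial>PZ)"
  proof (rule nn_integral_cong)
    fix z
    have "(\<integral>\<^sup>+x. ennreal (W (x - g z)) \<partial>lborel) = (\<integral>\<^sup>+x. ennreal (W x) \<partial>lborel)"
      by (rule translate_nn[where h="\<lambda>x. ennreal (W x)"]) measurable
    then show "(\<integral>\<^sup>+x. ennreal (W (x - g z)) \<partial>lborel) = ennreal (aU - aL)" using Wnn by simp
  qed
  also have "\<dots> = ennreal (aU - aL)" by (simp add: emeasure_space_1)
  finally show "hellinger_sq l u \<le> ennreal (aU - aL)" .
qed
lemma infnorm_vec_le:
  fixes x :: "real ^ 'D"
  assumes "\<And>j. \<bar>x $ j\<bar> \<le> K"
  shows "infnorm x \<le> K"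
proof -
  have "\<bar>x \<bullet> b\<bar> \<le> K" if "b \<in> Basis" for b
  proof -
    from that obtain i where "b = axis i 1" by (auto simp: Basis_vec_def)
    then show ?thesis using assms[of i] by (simp add: inner_axis)
  qed
  then show ?thesis unfolding infnorm_Max by (subst Max_le_iff) auto
qed

lemma enat_Inf_in:
  fixes S :: "enat set"
  assumes "Inf S < \<infinity>"
  shows "Inf S \<in> S"
proof -
  have "S \<noteq> {}" using assms by (auto simp: Inf_enat_def)
  then obtain y where "y \<in> S" by auto
  then have "(LEAST x. x \<in> S) \<in> S" by (rule LeastI)
  then show ?thesis using \<open>S \<noteq> {}\<close> by (simp add: Inf_enat_def)
qed
lemma main:
  fixes PZ :: "'z measure" and F :: "('z \<Rightarrow> real ^ 'D) set" and Z :: "'z set"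
  assumes P: "prob_space PZ" and sp: "space PZ = Z" and Fm: "F \<subseteq> borel_measurable PZ"
    and FK: "\<forall>f\<in>F. \<forall>z\<in>Z. \<forall>j. \<bar>f z $ j\<bar> \<le> K"
    and smin: "0 < \<sigma>min" "\<sigma>min < \<sigma>max" "\<sigma>min \<le> 1"
    and dl: "0 < \<delta>" "\<delta> \<le> 1"
    and cov: "covering_number (1 / (12 * real CARD('D) * real CARD('D)) * \<sigma>min ^ (CARD('D) + 3) * \<delta> ^ 4) F (sup_dist Z) < \<infinity>"
  shows "(let Ps = {mix_density PZ f \<sigma> | f \<sigma>. f \<in> F \<and> \<sigma> \<in> {\<sigma>min..\<sigma>max}} in
        bracketing_number \<delta> Ps < \<infinity> \<and>
        ln (real (the_enat (bracketing_number \<delta> Ps)))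
          \<le> ln (real (the_enat (covering_number (1 / (12 * real CARD('D) * real CARD('D)) * \<sigma>min ^ (CARD('D) + 3) * \<delta> ^ 4) F (sup_dist Z))))
             + ln ((12 * real CARD('D) * \<sigma>max + 1) / (\<sigma>min ^ (CARD('D) + 2) * \<delta> ^ 4)))"
proof -
  define n where "n = CARD('D)"
  have n1: "n \<ge> 1" unfolding n_def by (simp add: Suc_le_eq)
  have n1r: "real n \<ge> 1" using n1 by simp
  define \<eta> where "\<eta> = 1 / (12 * real CARD('D) * real CARD('D)) * \<sigma>min ^ (CARD('D) + 3) * \<delta> ^ 4"
  define \<epsilon> where "\<epsilon> = \<delta>\<^sup>2 / (12 * n)"
  define h where "h = \<sigma>min * \<epsilon>"
  define \<rho> where "\<rho> = \<epsilon> * \<sigma>min"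
  have e0: "0 < \<epsilon>" using dl n1 by (simp add: \<epsilon>_def)
  have d2: "\<delta>\<^sup>2 \<le> 1" using dl by (simp add: power_le_one)
  have e4: "4 * n * \<epsilon> \<le> 1/2"
  proof -
    have "4 * n * \<epsilon> = \<delta>\<^sup>2 / 3" using n1 by (simp add: \<epsilon>_def field_simps)
    then show ?thesis using d2 by simp
  qed
  have e1: "\<epsilon> < 1"
  proof -
    have "1 * \<epsilon> \<le> (4 * real n) * \<epsilon>" using n1r e0 by (intro mult_right_mono) auto
    then show ?thesis using e4 by simp
  qed
  have h0: "0 < h" using smin e0 by (simp add: h_def)
  have \<rho>0: "0 \<le> \<rho>" using smin e0 by (simp add: \<rho>_def)
  have diffd: "12 * n * \<epsilon> = \<delta>\<^sup>2" using n1 by (simp add: \<epsilon>_def)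
  define S where "S = {enat (card C) | C. finite C \<and> C \<subseteq> F \<and> (\<forall>f\<in>F. \<exists>g\<in>C. sup_dist Z f g \<le> \<eta>)}"
  have covS: "covering_number \<eta> F (sup_dist Z) = Inf S" unfolding S_def covering_number_def ..
  have "Inf S \<in> S" using cov covS \<eta>_def by (intro enat_Inf_in) simp
  then obtain C where C: "finite C" "C \<subseteq> F" "\<forall>f\<in>F. \<exists>g\<in>C. sup_dist Z f g \<le> \<eta>"
      and cardC: "Inf S = enat (card C)" unfolding S_def by auto
  have NC: "the_enat (covering_number \<eta> F (sup_dist Z)) = card C" using covS cardC by simp
  define M where "M = nat \<lfloor>(\<sigma>max - \<sigma>min) / h\<rfloor> + 1"
  define s where "s = (\<lambda>k::nat. \<sigma>min + real k * h)"
  define s' where "s' = (\<lambda>k::nat. \<sigma>min + real k * h + h)"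
  define tU where "tU = (\<lambda>k. s' k / sqrt (1 - \<epsilon>))"
  define tL where "tL = (\<lambda>k. s k / sqrt (1 + \<epsilon>))"
  define aU where "aU = (\<lambda>k. (s' k / (sqrt (1 - \<epsilon>) * s k)) ^ CARD('D) * exp (\<rho>\<^sup>2 / (2 * \<epsilon> * (s k)\<^sup>2)))"
  define aL where "aL = (\<lambda>k. (s k / (sqrt (1 + \<epsilon>) * s' k)) ^ CARD('D) * exp (- ((1 + 1/\<epsilon>) * \<rho>\<^sup>2 / (2 * (s k)\<^sup>2))))"
  have sk: "\<sigma>min \<le> s k" "0 < s k" "s k \<le> s' k" "s' k \<le> (1 + \<epsilon>) * s k" "\<rho> \<le> \<epsilon> * s k" for k
  proof -
    show 1: "\<sigma>min \<le> s k" using h0 by (simp add: s_def)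
    then show "0 < s k" using smin by simp
    show "s k \<le> s' k" using h0 by (simp add: s_def s'_def)
    have "h \<le> \<epsilon> * s k" using 1 e0 by (simp add: h_def mult.commute)
    then show "s' k \<le> (1 + \<epsilon>) * s k" by (simp add: s_def s'_def algebra_simps)
    show "\<rho> \<le> \<epsilon> * s k" using 1 e0 by (simp add: \<rho>_def)
  qed
  have tpos: "0 < tU k" "0 < tL k" for k
    using sk[of k] e0 e1 by (auto simp: tU_def tL_def)
  have aL0: "0 \<le> aL k" for k using sk[of k] e0 by (simp add: aL_def)
  have pw: "aL k * gauss_density (tL k) w \<le> aU k * gauss_density (tU k) w" for k and w :: "real ^ 'D"
  proof -
    have "aL k * gauss_density (tL k) w \<le> gauss_density (s k) (w - 0)"
      unfolding aL_def tL_def using sk[of k] e0 \<rho>0 by (intro gauss_lower) auto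
    also have "\<dots> \<le> aU k * gauss_density (tU k) w"
      unfolding aU_def tU_def using sk[of k] e0 e1 \<rho>0 by (intro gauss_upper) auto
    finally show ?thesis .
  qed
  have adiff: "aU k - aL k \<le> \<delta>\<^sup>2" for k
  proof -
    have "aU k - aL k \<le> 12 * n * \<epsilon>"
      unfolding aU_def aL_def n_def[symmetric]
      using sk[of k] e0 \<rho>0 n1 e4 by (intro const_diff) auto
    then show ?thesis using diffd by simp
  qed
  define lo where "lo = (\<lambda>(g::'z \<Rightarrow> real ^ 'D) k (x::real ^ 'D). \<integral>z. aL k * gauss_density (tL k) (x - g z) \<partial>PZ)"
  define up where "up = (\<lambda>(g::'z \<Rightarrow> real ^ 'D) k (x::real ^ 'D). \<integral>z. aU k * gauss_density (tU k) (x - g z) \<partial>PZ)"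
  define B where "B = (\<lambda>(g, k). (lo g k, up g k)) ` (C \<times> {..<M})"
  have Bfin: "finite B" unfolding B_def using C by auto
  have Bcard: "card B \<le> card C * M"
    unfolding B_def using card_image_le[of "C \<times> {..<M}"] C by (simp add: card_cartesian_product)
  have Bok1: "lo g k \<in> borel_measurable lborel \<and> up g k \<in> borel_measurable lborel \<and>
            (\<forall>x. 0 \<le> lo g k x \<and> lo g k x \<le> up g k x) \<and> hellinger_sq (lo g k) (up g k) \<le> ennreal (\<delta>\<^sup>2)"
    if gC: "g \<in> C" for g k
  proof -
    have gm: "g \<in> borel_measurable PZ" using gC C Fm by auto
    note bg = bracket_generic[OF P gm tpos(1)[of k] tpos(2)[of k] aL0[of k] pw[of k]]
    have "hellinger_sq (lo g k) (up g k) \<le> ennreal (aU k - aL k)" using bg(4) by (simp add: lo_def up_def)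
    also have "\<dots> \<le> ennreal (\<delta>\<^sup>2)" using adiff[of k] by (intro ennreal_leI)
    finally have H: "hellinger_sq (lo g k) (up g k) \<le> ennreal (\<delta>\<^sup>2)" .
    have "lo g k \<in> borel_measurable lborel" "up g k \<in> borel_measurable lborel"
      "\<forall>x. 0 \<le> lo g k x \<and> lo g k x \<le> up g k x"
      using bg(1-3) unfolding lo_def up_def by auto
    then show ?thesis using H by blast
  qed
  have Bok: "\<forall>(l, u)\<in>B. l \<in> borel_measurable lborel \<and> u \<in> borel_measurable lborel \<and>
            (\<forall>x. 0 \<le> l x \<and> l x \<le> u x) \<and> hellinger_sq l u \<le> ennreal (\<delta>\<^sup>2)"
    unfolding B_def using Bok1 by auto
  define Ps where "Ps = {mix_density PZ f \<sigma> | f \<sigma>. f \<in> F \<and> \<sigma> \<in> {\<sigma>min..\<sigma>max}}"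
  have Bcov: "\<forall>p\<in>Ps. \<exists>(l, u)\<in>B. \<forall>x. l x \<le> p x \<and> p x \<le> u x"
  proof
    fix p assume "p \<in> Ps"
    then obtain f \<sigma> where f: "f \<in> F" and sig: "\<sigma>min \<le> \<sigma>" "\<sigma> \<le> \<sigma>max" and p: "p = mix_density PZ f \<sigma>"
      unfolding Ps_def by auto
    obtain g where gC: "g \<in> C" and fg: "sup_dist Z f g \<le> \<eta>" using C f by auto
    have gF: "g \<in> F" using gC C by auto
    have fm: "f \<in> borel_measurable PZ" and gm: "g \<in> borel_measurable PZ" using f gF Fm by auto
    have close: "norm (f z - g z) \<le> \<rho>" if z: "z \<in> Z" for z
    proof -
      have bdd: "bdd_above ((\<lambda>z. infnorm (f z - g z)) ` Z)"
      proof (rule bdd_aboveI2)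
        fix z assume "z \<in> Z"
        have "infnorm (f z - g z) \<le> infnorm (f z) + infnorm (- g z)"
          using infnorm_triangle[of "f z" "- g z"] by simp
        also have "\<dots> \<le> K + K"
          using FK f gF \<open>z \<in> Z\<close> by (intro add_mono infnorm_vec_le) (auto simp: infnorm_neg)
        finally show "infnorm (f z - g z) \<le> K + K" .
      qed
      have "infnorm (f z - g z) \<le> sup_dist Z f g"
        unfolding sup_dist_def using bdd z by (rule cSUP_upper2) simp
      then have inf: "infnorm (f z - g z) \<le> \<eta>" using fg by simp
      have "norm (f z - g z) \<le> sqrt (real n) * infnorm (f z - g z)"
        using norm_le_infnorm[of "f z - g z"] by (simp add: n_def)
      also have "\<dots> \<le> sqrt (real n) * \<eta>" using inf by (intro mult_left_mono) auto
      also have "\<dots> \<le> real n * \<eta>"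
      proof (rule mult_right_mono)
        have "sqrt (real n) \<le> sqrt (real n * real n)" using n1r by (intro real_sqrt_le_mono) simp
        then show "sqrt (real n) \<le> real n" by simp
        show "0 \<le> \<eta>" using smin dl by (simp add: \<eta>_def)
      qed
      also have "\<dots> = \<sigma>min ^ (n + 3) * \<delta> ^ 4 / (12 * n)"
        using n1 by (simp add: \<eta>_def n_def)
      also have "\<dots> \<le> \<sigma>min * \<delta>\<^sup>2 / (12 * n)"
      proof (rule divide_right_mono)
        have a: "\<sigma>min ^ (n + 2) \<le> 1" using smin by (intro power_le_one) auto
        have b: "\<delta>\<^sup>2 \<le> 1" by (rule d2)
        have "\<sigma>min ^ (n + 2) * \<delta>\<^sup>2 \<le> 1 * 1" using a b smin dl by (intro mult_mono) auto
        then have "\<sigma>min * \<delta>\<^sup>2 * (\<sigma>min ^ (n + 2) * \<delta>\<^sup>2) \<le> \<sigma>min * \<delta>\<^sup>2 * 1"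
          using smin dl by (intro mult_left_mono) auto
        moreover have "\<sigma>min ^ (n + 3) * \<delta> ^ 4 = \<sigma>min * \<delta>\<^sup>2 * (\<sigma>min ^ (n + 2) * \<delta>\<^sup>2)"
          by (simp add: power_add power2_eq_square numeral_eq_Suc)
        ultimately show "\<sigma>min ^ (n + 3) * \<delta> ^ 4 \<le> \<sigma>min * \<delta>\<^sup>2" by simp
      qed simp
      also have "\<dots> = \<rho>" by (simp add: \<rho>_def \<epsilon>_def)
      finally show ?thesis .
    qed
    define k where "k = nat \<lfloor>(\<sigma> - \<sigma>min) / h\<rfloor>"
    have q0: "0 \<le> (\<sigma> - \<sigma>min) / h" using sig h0 by simp
    have kle: "real k \<le> (\<sigma> - \<sigma>min) / h" and kgt: "(\<sigma> - \<sigma>min) / h < real k + 1"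
      using q0 unfolding k_def by linarith+
    have skle: "s k \<le> \<sigma>" using kle h0 by (simp add: s_def field_simps)
    have sgle: "\<sigma> \<le> s' k" using kgt h0 by (simp add: s'_def field_simps)
    have kM: "k < M"
    proof -
      have "(\<sigma> - \<sigma>min) / h \<le> (\<sigma>max - \<sigma>min) / h" using sig h0 by (intro divide_right_mono) auto
      then have "\<lfloor>(\<sigma> - \<sigma>min) / h\<rfloor> \<le> \<lfloor>(\<sigma>max - \<sigma>min) / h\<rfloor>" by (rule floor_mono)
      then show ?thesis unfolding k_def M_def by linarith
    qed
    have sig0: "0 < \<sigma>" using sig smin by simp
    have intf: "integrable PZ (\<lambda>z. 1 * gauss_density \<sigma> (x - f z))" for x
      by (rule gauss_comp_integrable[OF P fm sig0])
    have intg: "integrable PZ (\<lambda>z. aL k * gauss_density (tL k) (x - g z))"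
                "integrable PZ (\<lambda>z. aU k * gauss_density (tU k) (x - g z))" for x
      by (rule gauss_comp_integrable[OF P gm tpos(2)], rule gauss_comp_integrable[OF P gm tpos(1)])
    have "lo g k x \<le> p x \<and> p x \<le> up g k x" for x
    proof
      have "(\<integral>z. aL k * gauss_density (tL k) (x - g z) \<partial>PZ) \<le> (\<integral>z. 1 * gauss_density \<sigma> (x - f z) \<partial>PZ)"
      proof (rule integral_mono[OF intg(1) intf])
        fix z assume "z \<in> space PZ"
        then have "norm (f z - g z) \<le> \<rho>" using close sp by auto
        then have "aL k * gauss_density (tL k) (x - g z) \<le> gauss_density \<sigma> ((x - g z) - (f z - g z))"
          unfolding aL_def tL_def using sk[of k] skle sgle e0 by (intro gauss_lower) auto
        then show "aL k * gauss_density (tL k) (x - g z) \<le> 1 * gauss_density \<sigma> (x - f z)" by simp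
      qed
      then show "lo g k x \<le> p x" by (simp add: lo_def p mix_density_def)
      have "(\<integral>z. 1 * gauss_density \<sigma> (x - f z) \<partial>PZ) \<le> (\<integral>z. aU k * gauss_density (tU k) (x - g z) \<partial>PZ)"
      proof (rule integral_mono[OF intf intg(2)])
        fix z assume "z \<in> space PZ"
        then have "norm (f z - g z) \<le> \<rho>" using close sp by auto
        then have "gauss_density \<sigma> ((x - g z) - (f z - g z)) \<le> aU k * gauss_density (tU k) (x - g z)"
          unfolding aU_def tU_def using sk[of k] skle sgle e0 e1 by (intro gauss_upper) auto
        then show "1 * gauss_density \<sigma> (x - f z) \<le> aU k * gauss_density (tU k) (x - g z)" by simp
      qed
      then show "p x \<le> up g k x" by (simp add: up_def p mix_density_def)
    qed
    moreover have "(lo g k, up g k) \<in> B" unfolding B_def using gC kM by auto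
    ultimately show "\<exists>(l, u)\<in>B. \<forall>x. l x \<le> p x \<and> p x \<le> u x" by auto
  qed
  have bn: "bracketing_number \<delta> Ps \<le> enat (card B)"
    unfolding bracketing_number_def using Bfin Bok Bcov by (intro Inf_lower) blast
  then have bnfin: "bracketing_number \<delta> Ps < \<infinity>" by (cases "bracketing_number \<delta> Ps") auto
  have bnle: "the_enat (bracketing_number \<delta> Ps) \<le> card C * M"
    using bn Bcard bnfin by (cases "bracketing_number \<delta> Ps") auto
  define c' where "c' = (12 * real CARD('D) * \<sigma>max + 1) / (\<sigma>min ^ (CARD('D) + 2) * \<delta> ^ 4)"
  have Mle: "real M \<le> c'"
  proof -
    have q0: "0 \<le> (\<sigma>max - \<sigma>min) / h" using smin h0 by simp
    have "real M \<le> (\<sigma>max - \<sigma>min) / h + 1" unfolding M_def using q0 by linarith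
    also have "\<dots> \<le> \<sigma>max / h + 1" using h0 smin by (simp add: divide_right_mono)
    also have "\<sigma>max / h = 12 * n * \<sigma>max / (\<sigma>min * \<delta>\<^sup>2)"
      using n1 smin dl by (simp add: h_def \<epsilon>_def field_simps)
    also have "12 * n * \<sigma>max / (\<sigma>min * \<delta>\<^sup>2) + 1 \<le> 12 * n * \<sigma>max / (\<sigma>min ^ (n + 2) * \<delta> ^ 4) + 1 / (\<sigma>min ^ (n + 2) * \<delta> ^ 4)"
    proof (rule add_mono)
      have le: "\<sigma>min ^ (n + 2) * \<delta> ^ 4 \<le> \<sigma>min * \<delta>\<^sup>2"
      proof -
        have a: "\<sigma>min ^ (n + 1) \<le> 1" using smin by (intro power_le_one) auto
        have "\<sigma>min ^ (n + 1) * \<delta>\<^sup>2 \<le> 1 * 1" using a d2 smin dl by (intro mult_mono) auto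
        then have A: "\<sigma>min * \<delta>\<^sup>2 * (\<sigma>min ^ (n + 1) * \<delta>\<^sup>2) \<le> \<sigma>min * \<delta>\<^sup>2 * 1"
          using smin dl by (intro mult_left_mono) auto
        have eq: "\<sigma>min ^ (n + 2) * \<delta> ^ 4 = \<sigma>min * \<delta>\<^sup>2 * (\<sigma>min ^ (n + 1) * \<delta>\<^sup>2)"
          by (simp add: power_add power2_eq_square numeral_eq_Suc)
        show ?thesis unfolding eq using A by (simp only: mult_1_right)
      qed
      have pos: "0 < \<sigma>min ^ (n + 2) * \<delta> ^ 4" using smin dl by simp
      show "12 * n * \<sigma>max / (\<sigma>min * \<delta>\<^sup>2) \<le> 12 * n * \<sigma>max / (\<sigma>min ^ (n + 2) * \<delta> ^ 4)"
        using le pos smin dl by (intro divide_left_mono mult_pos_pos) auto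
      have "\<sigma>min ^ (n + 2) * \<delta> ^ 4 \<le> 1"
      proof -
        have "\<sigma>min * \<delta>\<^sup>2 \<le> 1 * 1" using smin d2 dl by (intro mult_mono) auto
        then show ?thesis using le by linarith
      qed
      then show "1 \<le> 1 / (\<sigma>min ^ (n + 2) * \<delta> ^ 4)" using pos by simp
    qed
    also have "\<dots> = c'" unfolding c'_def n_def by (simp add: add_divide_distrib)
    finally show ?thesis .
  qed
  have c'1: "1 \<le> c'"
  proof -
    have "1 \<le> real M" unfolding M_def by simp
    then show ?thesis using Mle by simp
  qed
  have lnC0: "0 \<le> ln (real (card C))" by (cases "card C = 0") auto
  have lnc'0: "0 \<le> ln c'" using c'1 by simp
  have main_ineq: "ln (real (the_enat (bracketing_number \<delta> Ps))) \<le> ln (real (card C)) + ln c'"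
  proof (cases "the_enat (bracketing_number \<delta> Ps) = 0")
    case True then show ?thesis using lnC0 lnc'0 by simp
  next
    case False
    then have b1: "1 \<le> real (the_enat (bracketing_number \<delta> Ps))" by simp
    have "card C * M \<noteq> 0" using False bnle by linarith
    then have C1: "card C \<ge> 1" and M1: "M \<ge> 1" by auto
    have "ln (real (the_enat (bracketing_number \<delta> Ps))) \<le> ln (real (card C) * real M)"
    proof (subst ln_le_cancel_iff)
      show "0 < real (the_enat (bracketing_number \<delta> Ps))" using b1 by simp
      show "0 < real (card C) * real M" using C1 M1 by simp
      show "real (the_enat (bracketing_number \<delta> Ps)) \<le> real (card C) * real M"
        using bnle by (simp flip: of_nat_mult)
    qed
    also have "\<dots> = ln (real (card C)) + ln (real M)" using C1 M1 by (simp add: ln_mult)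
    also have "\<dots> \<le> ln (real (card C)) + ln c'" using M1 Mle by simp
    finally show ?thesis .
  qed
  show ?thesis
    unfolding Let_def Ps_def[symmetric]
    using bnfin main_ineq NC by (simp add: \<eta>_def c'_def)
qed
theorem lemma1:
  shows "\<exists>\<delta>s>0. \<forall>K>0. \<forall>\<sigma>max>0. \<exists>c>0. \<exists>c'>0.
    \<forall>d::nat. \<forall>Z::(nat \<Rightarrow> real) set. \<forall>PZ. \<forall>\<sigma>min::real.
      \<forall>F::((nat \<Rightarrow> real) \<Rightarrow> real ^ 'D) set. \<forall>\<delta>::real.
      d \<ge> 1 \<and> Z \<subseteq> Rd d \<and> openin (top_of_set (Rd d)) Z \<and>
      prob_space PZ \<and> space PZ = Z \<and> sets PZ = sets (restrict_space borel Z) \<and>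
      0 < \<sigma>min \<and> \<sigma>min < \<sigma>max \<and> \<sigma>min \<le> 1 \<and>
      F \<subseteq> borel_measurable PZ \<and> (\<forall>f\<in>F. \<forall>z\<in>Z. \<forall>j. \<bar>f z $ j\<bar> \<le> K) \<and>
      0 < \<delta> \<and> \<delta> \<le> \<delta>s \<and>
      covering_number (c * \<sigma>min ^ (CARD('D) + 3) * \<delta> ^ 4) F (sup_dist Z) < \<infinity>
      \<longrightarrow>
      (let Ps = {mix_density PZ f \<sigma> | f \<sigma>. f \<in> F \<and> \<sigma> \<in> {\<sigma>min..\<sigma>max}} in
        bracketing_number \<delta> Ps < \<infinity> \<and>
        ln (real (the_enat (bracketing_number \<delta> Ps)))
          \<le> ln (real (the_enat (covering_number (c * \<sigma>min ^ (CARD('D) + 3) * \<delta> ^ 4) F (sup_dist Z))))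
             + ln (c' / (\<sigma>min ^ (CARD('D) + 2) * \<delta> ^ 4)))"
proof (rule exI[of _ 1], intro conjI allI impI)
  show "(0::real) < 1" by simp
  fix K \<sigma>max :: real
  assume K: "0 < K" and sm: "0 < \<sigma>max"
  have c0: "0 < 1 / (12 * real CARD('D) * real CARD('D))" by simp
  have c'0: "0 < 12 * real CARD('D) * \<sigma>max + 1" using sm by (intro add_nonneg_pos mult_nonneg_nonneg) auto
  show "\<exists>c>0. \<exists>c'>0.
    \<forall>d::nat. \<forall>Z::(nat \<Rightarrow> real) set. \<forall>PZ. \<forall>\<sigma>min::real.
      \<forall>F::((nat \<Rightarrow> real) \<Rightarrow> real ^ 'D) set. \<forall>\<delta>::real.
      d \<ge> 1 \<and> Z \<subseteq> Rd d \<and> openin (top_of_set (Rd d)) Z \<and>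
      prob_space PZ \<and> space PZ = Z \<and> sets PZ = sets (restrict_space borel Z) \<and>
      0 < \<sigma>min \<and> \<sigma>min < \<sigma>max \<and> \<sigma>min \<le> 1 \<and>
      F \<subseteq> borel_measurable PZ \<and> (\<forall>f\<in>F. \<forall>z\<in>Z. \<forall>j. \<bar>f z $ j\<bar> \<le> K) \<and>
      0 < \<delta> \<and> \<delta> \<le> 1 \<and>
      covering_number (c * \<sigma>min ^ (CARD('D) + 3) * \<delta> ^ 4) F (sup_dist Z) < \<infinity>
      \<longrightarrow>
      (let Ps = {mix_density PZ f \<sigma> | f \<sigma>. f \<in> F \<and> \<sigma> \<in> {\<sigma>min..\<sigma>max}} in
        bracketing_number \<delta> Ps < \<infinity> \<and>
        ln (real (the_enat (bracketing_number \<delta> Ps)))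
          \<le> ln (real (the_enat (covering_number (c * \<sigma>min ^ (CARD('D) + 3) * \<delta> ^ 4) F (sup_dist Z))))
             + ln (c' / (\<sigma>min ^ (CARD('D) + 2) * \<delta> ^ 4)))"
    using c0 c'0 main[where K=K and \<sigma>max=\<sigma>max] by blast
qed

end
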